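(* Let $K$ be a fractal gasket with $\{\omega_\alpha,\omega_\beta,\omega_\gamma\}\subset K$ satisfying the top isolated condition. Then its topology automaton $M_K$ satisfies the $\gamma$-isolated condition.
   Context: Let $\Delta\subset\mathbb R^2$ be the triangle with vertices $\omega_\alpha=(0,0)$, $\omega_\beta=(1,0)$, $\omega_\gamma=(1/2,\sqrt3/2)$. A fractal gasket is the attractor $K$ of $\{\varphi_j(z)=r_j(z+d_j)\}_{j=1}^N$, $r_j\in(0,1)$, $d_j\in\mathbb R^2$, with $\bigcup_j\varphi_j(\Delta)\subset\Delta$ and, for $i\ne j$, $\varphi_i(\Delta)\cap\varphi_j(\Delta)$ consisting only of common vertices. $\Sigma=\{1,\dots,N\}$; $\alpha=-1$ if $(0,0)\notin K$, else $\varphi_\alpha((0,0))=(0,0)$; $\beta=-2$ or $\varphi_\beta$ fixes $(1,0)$; $\gamma=-3$ or $\varphi_\gamma$ fixes $\omega_\gamma$. Top isolated condition: $\omega_\gamma\in K$ and $\varphi_\gamma(\Delta)\cap\varphi_j(\Delta)=\emptyset$ for all $j\ne\gamma$. Topology automaton $M_K$: the automaton with states $S_{uv}$ ($u\ne v\in\{\alpha,\beta,\gamma\}$), $Id$, $Exit$, input alphabet $\Sigma^2$, $\delta(Id,(i,i))=Id$, and for $i\ne j$: $\delta(Id,(i,j))=S_{uv}$ if $u,v\in\Sigma$ and $\varphi_i(\omega_v)=\varphi_j(\omega_u)$, $\delta(Id,(i,j))=Exit$ if $\varphi_i(K)\cap\varphi_j(K)=\emptyset$; $\delta(S_{uv},(i,j))=S_{uv}$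 if $(i,j)=(v,u)$, else $Exit$. $\mathcal P_{uv}=\{(i,j):\delta(Id,(i,j))=S_{uv}\}$; $i\triangleleft_{uv}j$ iff $(i,j)\in\mathcal P_{uv}$ (iff $j\triangleleft_{vu}i$); $j$ is $uv$-isolated if there is neither $i$ with $i\triangleleft_{uv}j$ nor $k$ with $j\triangleleft_{uv}k$. $\gamma$-isolated condition: $\alpha,\beta,\gamma\in\Sigma$; the directed graph on $\Sigma$ with edges $\mathcal P_{\alpha\gamma}\cup\mathcal P_{\beta\gamma}$ has no directed cycle; $\gamma$ is $\alpha\gamma$-, $\beta\gamma$- and $\alpha\beta$-isolated. *)

theory Defs
  imports "HOL-Analysis.Analysis"
begin

text \<open>The plane R^2 is modelled by the complex numbers (x,y) = x + i y.
  The three vertex labels alpha, beta, gamma of the triangle Delta.\<close>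

datatype vlabel = VA | VB | VG

fun omega :: "vlabel \<Rightarrow> complex" where
  "omega VA = 0"
| "omega VB = 1"
| "omega VG = Complex (1/2) (sqrt 3 / 2)"

definition tri_vertices :: "complex set" where
  "tri_vertices = {omega VA, omega VB, omega VG}"

definition tri :: "complex set" where
  "tri = convex hull tri_vertices"

definition alph :: "int \<Rightarrow> int set" where
  "alph N = {1..N}"

definition gmap :: "(int \<Rightarrow> real) \<Rightarrow> (int \<Rightarrow> complex) \<Rightarrow> int \<Rightarrow> complex \<Rightarrow> complex" where
  "gmap r d j z = of_real (r j) * (z + d j)"

definition fractal_gasket :: "int \<Rightarrow> (int \<Rightarrow> real) \<Rightarrow> (int \<Rightarrow> complex) \<Rightarrow> complex set \<Rightarrow> bool" where
  "fractal_gasket N r d K \<longleftrightarrow>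
     1 \<le> N \<and>
     (\<forall>j\<in>alph N. 0 < r j \<and> r j < 1) \<and>
     (\<Union>j\<in>alph N. gmap r d j ` tri) \<subseteq> tri \<and>
     (\<forall>i\<in>alph N. \<forall>j\<in>alph N. i \<noteq> j \<longrightarrow>
        gmap r d i ` tri \<inter> gmap r d j ` tri \<subseteq> gmap r d i ` tri_vertices \<inter> gmap r d j ` tri_vertices) \<and>
     compact K \<and> K \<noteq> {} \<and> K = (\<Union>j\<in>alph N. gmap r d j ` K)"

fun default_idx :: "vlabel \<Rightarrow> int" where
  "default_idx VA = -1"
| "default_idx VB = -2"
| "default_idx VG = -3"

definition idx :: "int \<Rightarrow> (int \<Rightarrow> real) \<Rightarrow> (int \<Rightarrow> complex) \<Rightarrow> complex set \<Rightarrow> vlabel \<Rightarrow> int" where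
  "idx N r d K v = (if omega v \<in> K
       then (THE j. j \<in> alph N \<and> gmap r d j (omega v) = omega v)
       else default_idx v)"

definition top_isolated :: "int \<Rightarrow> (int \<Rightarrow> real) \<Rightarrow> (int \<Rightarrow> complex) \<Rightarrow> complex set \<Rightarrow> bool" where
  "top_isolated N r d K \<longleftrightarrow> omega VG \<in> K \<and>
     (\<forall>j\<in>alph N. j \<noteq> idx N r d K VG \<longrightarrow>
        gmap r d (idx N r d K VG) ` tri \<inter> gmap r d j ` tri = {})"

datatype state = S vlabel vlabel | Id | Exit

definition delta_Id_to_S :: "int \<Rightarrow> (int \<Rightarrow> real) \<Rightarrow> (int \<Rightarrow> complex) \<Rightarrow> complex set
    \<Rightarrow> vlabel \<Rightarrow> vlabel \<Rightarrow> int \<Rightarrow> int \<Rightarrow> bool" where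
  "delta_Id_to_S N r d K u v i j \<longleftrightarrow>
     i \<in> alph N \<and> j \<in> alph N \<and> i \<noteq> j \<and> u \<noteq> v \<and>
     idx N r d K u \<in> alph N \<and> idx N r d K v \<in> alph N \<and>
     gmap r d i (omega v) = gmap r d j (omega u)"

definition Puv :: "int \<Rightarrow> (int \<Rightarrow> real) \<Rightarrow> (int \<Rightarrow> complex) \<Rightarrow> complex set
    \<Rightarrow> vlabel \<Rightarrow> vlabel \<Rightarrow> (int \<times> int) set" where
  "Puv N r d K u v = {(i, j). delta_Id_to_S N r d K u v i j}"

definition uv_isolated :: "int \<Rightarrow> (int \<Rightarrow> real) \<Rightarrow> (int \<Rightarrow> complex) \<Rightarrow> complex set
    \<Rightarrow> vlabel \<Rightarrow> vlabel \<Rightarrow> int \<Rightarrow> bool" where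
  "uv_isolated N r d K u v j \<longleftrightarrow>
     \<not> (\<exists>i. (i, j) \<in> Puv N r d K u v) \<and> \<not> (\<exists>k. (j, k) \<in> Puv N r d K u v)"

definition gamma_isolated :: "int \<Rightarrow> (int \<Rightarrow> real) \<Rightarrow> (int \<Rightarrow> complex) \<Rightarrow> complex set \<Rightarrow> bool" where
  "gamma_isolated N r d K \<longleftrightarrow>
     idx N r d K VA \<in> alph N \<and> idx N r d K VB \<in> alph N \<and> idx N r d K VG \<in> alph N \<and>
     acyclic (Puv N r d K VA VG \<union> Puv N r d K VB VG) \<and>
     uv_isolated N r d K VA VG (idx N r d K VG) \<and>
     uv_isolated N r d K VB VG (idx N r d K VG) \<and>
     uv_isolated N r d K VA VB (idx N r d K VG)"

end

theory Submission
  imports Defs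
begin

lemma tri_compact: "compact tri"
  unfolding tri_def tri_vertices_def by (rule finite_imp_compact_convex_hull) simp

lemma omega_in_tri: "omega v \<in> tri"
  unfolding tri_def tri_vertices_def by (cases v) (auto intro: hull_inc)

lemma gmap_dist: "dist (gmap r d j y) (gmap r d j p) = \<bar>r j\<bar> * dist y p"
proof -
  have "gmap r d j y - gmap r d j p = of_real (r j) * (y - p)"
    by (simp add: gmap_def algebra_simps)
  then show ?thesis by (simp add: dist_norm norm_mult)
qed

lemma K_sub_tri:
  assumes fg: "fractal_gasket N r d K"
  shows "K \<subseteq> tri"
proof -
  have cK: "compact K" and neK: "K \<noteq> {}" and KU: "K = (\<Union>j\<in>alph N. gmap r d j ` K)"
    and rr: "\<forall>j\<in>alph N. 0 < r j \<and> r j < 1"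
    and sub: "(\<Union>j\<in>alph N. gmap r d j ` tri) \<subseteq> tri"
    using fg unfolding fractal_gasket_def by auto
  have ct: "closed tri" using tri_compact compact_imp_closed by blast
  have net: "tri \<noteq> {}" using omega_in_tri by blast
  have "continuous_on K (\<lambda>x. infdist x tri)"
    by (intro continuous_on_infdist continuous_on_id)
  then obtain x0 where x0: "x0 \<in> K" "\<forall>x\<in>K. infdist x tri \<le> infdist x0 tri"
    using continuous_attains_sup[OF cK neK] by blast
  then obtain j y where jy: "j \<in> alph N" "y \<in> K" "x0 = gmap r d j y"
    using KU by blast
  obtain p where p: "p \<in> tri" "infdist y tri = dist y p"
    using infdist_attains_inf[OF ct net] by blast
  have "gmap r d j p \<in> tri" using sub jy(1) p(1) by blast
  then have "infdist x0 tri \<le> dist (gmap r d j y) (gmap r d j p)"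
    using jy(3) infdist_le by blast
  also have "\<dots> = r j * infdist y tri"
  proof -
    have "0 < r j" using rr jy(1) by blast
    then have "\<bar>r j\<bar> = r j" by simp
    then show ?thesis using gmap_dist p(2) by simp
  qed
  also have "\<dots> \<le> r j * infdist x0 tri"
    using x0(2) jy(2) rr jy(1) by (simp add: mult_left_mono)
  finally have "(1 - r j) * infdist x0 tri \<le> 0" by (simp add: algebra_simps)
  moreover have "1 - r j > 0" using rr jy(1) by simp
  ultimately have "infdist x0 tri \<le> 0"
    by (simp add: mult_le_0_iff)
  then show ?thesis
    using x0(2) in_closed_iff_infdist_zero[OF ct net] infdist_nonneg
    by (metis antisym subsetI)
qed

lemma tri_ineq:
  assumes "z \<in> tri"
  shows "0 \<le> Im z \<and> Im z \<le> sqrt 3 * Re z \<and> Im z \<le> sqrt 3 * (1 - Re z)"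
proof -
  obtain u v w where uvw: "0 \<le> u" "0 \<le> v" "0 \<le> w" "u + v + w = 1"
    "z = u *\<^sub>R 0 + v *\<^sub>R 1 + w *\<^sub>R Complex (1/2) (sqrt 3 / 2)"
    using assms unfolding tri_def tri_vertices_def convex_hull_3 by auto
  have re: "Re z = v + w / 2" and im: "Im z = w * sqrt 3 / 2"
    using uvw(5) by (simp_all add: scaleR_conv_of_real)
  have s: "sqrt 3 > 0" by simp
  have "(v + w) * sqrt 3 \<le> 1 * sqrt 3"
    by (rule mult_right_mono) (use uvw in auto)
  then show ?thesis using uvw s unfolding re im
    by (auto simp: algebra_simps) 
qed

lemma lin_aux:
  fixes t a b c :: real and p y q :: complex
  assumes "a * Re p + b * Im p + c = 0" "a * Re y + b * Im y + c \<ge> 0"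
    "a * Re q + b * Im q + c \<ge> 0"
    "Re q = Re p + t * (Re p - Re y)" "Im q = Im p + t * (Im p - Im y)" "t > 0"
  shows "a * Re y + b * Im y + c = 0"
proof -
  have "a * Re q + b * Im q + c = - t * (a * Re y + b * Im y + c)"
  proof -
    have "a * Re q + b * Im q + c = (a * Re p + b * Im p + c) * (1 + t) - t * (a * Re y + b * Im y + c)"
      by (simp add: assms(4,5) algebra_simps)
    then show ?thesis using assms(1) by simp
  qed
  then have e: "a * Re q + b * Im q + c = - (t * (a * Re y + b * Im y + c))" by simp
  show ?thesis
  proof (rule ccontr)
    assume "a * Re y + b * Im y + c \<noteq> 0"
    then have "a * Re y + b * Im y + c > 0" using assms(2) by simp
    then have "t * (a * Re y + b * Im y + c) > 0" using assms(6) by simp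
    then show False using e assms(3) by linarith
  qed
qed

lemma gmap_diff: "gmap r d j z - gmap r d j p = of_real (r j) * (z - p)"
  by (simp add: gmap_def algebra_simps)

lemma fix_exists:
  assumes fg: "fractal_gasket N r d K" and vK: "omega v \<in> K"
  shows "\<exists>j\<in>alph N. gmap r d j (omega v) = omega v"
proof -
  have KU: "K = (\<Union>j\<in>alph N. gmap r d j ` K)"
    and rr: "\<forall>j\<in>alph N. 0 < r j \<and> r j < 1"
    and sub: "(\<Union>j\<in>alph N. gmap r d j ` tri) \<subseteq> tri"
    using fg unfolding fractal_gasket_def by auto
  obtain j y where jy: "j \<in> alph N" "y \<in> K" "omega v = gmap r d j y"
    using KU vK by blast
  have yt: "y \<in> tri" using K_sub_tri[OF fg] jy(2) by blast
  define q where "q = gmap r d j (omega v)"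
  have qt: "q \<in> tri" using sub jy(1) omega_in_tri unfolding q_def by blast
  have rj: "r j > 0" using rr jy(1) by simp
  have D: "q - omega v = of_real (r j) * (omega v - y)"
    unfolding q_def jy(3) using gmap_diff jy(3) by metis
  have hre: "Re q = Re (omega v) + r j * (Re (omega v) - Re y)"
    using arg_cong[OF D, of Re] by simp
  have him: "Im q = Im (omega v) + r j * (Im (omega v) - Im y)"
    using arg_cong[OF D, of Im] by simp
  have ty: "0 \<le> Im y \<and> Im y \<le> sqrt 3 * Re y \<and> Im y \<le> sqrt 3 * (1 - Re y)"
    using tri_ineq[OF yt] .
  have tq: "0 \<le> Im q \<and> Im q \<le> sqrt 3 * Re q \<and> Im q \<le> sqrt 3 * (1 - Re q)"
    using tri_ineq[OF qt] .
  have f1: "0 * Re y + 1 * Im y + 0 = 0" if "0 * Re (omega v) + 1 * Im (omega v) + 0 = 0"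
    using lin_aux[OF that _ _ hre him rj] ty tq by simp
  have f2: "sqrt 3 * Re y + (-1) * Im y + 0 = 0"
    if "sqrt 3 * Re (omega v) + (-1) * Im (omega v) + 0 = 0"
    using lin_aux[OF that _ _ hre him rj] ty tq by simp
  have f3: "(- sqrt 3) * Re y + (-1) * Im y + sqrt 3 = 0"
    if "(- sqrt 3) * Re (omega v) + (-1) * Im (omega v) + sqrt 3 = 0"
    using lin_aux[OF that _ _ hre him rj] ty tq by (simp add: algebra_simps)
  have "y = omega v"
  proof (cases v)
    case VA
    then show ?thesis using f1 f2 by (auto intro: complex_eqI)
  next
    case VB
    then show ?thesis using f1 f3 by (auto intro: complex_eqI)
  next
    case VG
    then have a: "sqrt 3 * Re y - Im y = 0" "- sqrt 3 * Re y - Im y + sqrt 3 = 0"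
      using f2 f3 by (auto simp: algebra_simps)
    then have "sqrt 3 * Re y = sqrt 3 * (1/2)" by linarith
    then have "Re y = 1/2" by simp
    moreover then have "Im y = sqrt 3 / 2" using a by simp
    ultimately show ?thesis using VG by (auto intro: complex_eqI)
  qed
  then show ?thesis using jy(1,3) by metis
qed

lemma fix_unique_aux:
  assumes fg: "fractal_gasket N r d K" and j: "j \<in> alph N" and k: "k \<in> alph N"
    and jk: "j \<noteq> k" and le: "r j \<le> r k"
    and fj: "gmap r d j p = p" and fk: "gmap r d k p = p" and pt: "p \<in> tri"
  shows False
proof -
  have rr: "\<forall>j\<in>alph N. 0 < r j \<and> r j < 1"
    and disj: "gmap r d j ` tri \<inter> gmap r d k ` tri \<subseteq> gmap r d j ` tri_vertices \<inter> gmap r d k ` tri_vertices"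
    using fg j k jk unfolding fractal_gasket_def by auto
  have rj: "r j > 0" and rk: "r k > 0" using rr j k by auto
  define c where "c = Complex (1/2) (sqrt 3 / 6)"
  have "c = (1/3) *\<^sub>R 0 + (1/3) *\<^sub>R 1 + (1/3) *\<^sub>R Complex (1/2) (sqrt 3 / 2)"
    unfolding c_def by (auto intro: complex_eqI simp: scaleR_conv_of_real)
  then have ct: "c \<in> tri" unfolding tri_def tri_vertices_def convex_hull_3
    by (auto intro!: exI[of _ "1/3"])
  define t where "t = r j / r k"
  have t0: "0 \<le> t" "t \<le> 1" using rj rk le unfolding t_def by auto
  define c' where "c' = (1 - t) *\<^sub>R p + t *\<^sub>R c"
  have c't: "c' \<in> tri" unfolding c'_def
    using convexD[of tri p c "1 - t" t] pt ct t0 unfolding tri_def by (auto simp: convex_convex_hull)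
  have "gmap r d k c' = p + of_real (r k) * (c' - p)"
    using gmap_diff[of r d k c' p] fk by (simp add: algebra_simps)
  also have "\<dots> = p + of_real (r k * t) * (c - p)"
    unfolding c'_def by (simp add: scaleR_conv_of_real algebra_simps)
  also have "r k * t = r j" unfolding t_def using rk by simp
  also have "p + of_real (r j) * (c - p) = gmap r d j c"
    using gmap_diff[of r d j c p] fj by (simp add: algebra_simps)
  finally have "gmap r d j c \<in> gmap r d j ` tri \<inter> gmap r d k ` tri"
    using ct c't by (metis IntI image_eqI)
  then have "gmap r d j c \<in> gmap r d j ` tri_vertices" using disj by blast
  then obtain w where w: "w \<in> tri_vertices" "gmap r d j c = gmap r d j w" by blast
  then have "of_real (r j) * (c - w) = 0" using gmap_diff[of r d j c w] by simp
  then have "c = w" using rj by simp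
  moreover have "sqrt 3 / 6 \<noteq> 0" "sqrt 3 / 6 \<noteq> sqrt 3 / 2" by auto
  ultimately show False using w(1) unfolding tri_vertices_def c_def
    by (auto simp: Complex_eq_0 complex_eq_iff)
qed

lemma idx_fix:
  assumes fg: "fractal_gasket N r d K" and vK: "omega v \<in> K"
  shows "idx N r d K v \<in> alph N \<and> gmap r d (idx N r d K v) (omega v) = omega v"
proof -
  have ex1: "\<exists>!j. j \<in> alph N \<and> gmap r d j (omega v) = omega v"
  proof (rule ex_ex1I)
    show "\<exists>j. j \<in> alph N \<and> gmap r d j (omega v) = omega v"
      using fix_exists[OF fg vK] by blast
  next
    fix j k assume a: "j \<in> alph N \<and> gmap r d j (omega v) = omega v"
      "k \<in> alph N \<and> gmap r d k (omega v) = omega v"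
    show "j = k"
    proof (rule ccontr)
      assume "j \<noteq> k"
      then show False
        using fix_unique_aux[OF fg, of j k "omega v"] fix_unique_aux[OF fg, of k j "omega v"]
          a omega_in_tri by (cases "r j \<le> r k") auto
    qed
  qed
  show ?thesis unfolding idx_def using vK theI'[OF ex1] by simp
qed

theorem lemma5p1:
  fixes N :: int and r :: "int \<Rightarrow> real" and d :: "int \<Rightarrow> complex" and K :: "complex set"
  assumes "fractal_gasket N r d K"
    and "{omega VA, omega VB, omega VG} \<subseteq> K"
    and "top_isolated N r d K"
  shows "gamma_isolated N r d K"
proof -
  have fg: "fractal_gasket N r d K" by fact
  have rr: "\<forall>j\<in>alph N. 0 < r j \<and> r j < 1" using fg unfolding fractal_gasket_def by auto
  have iA: "idx N r d K VA \<in> alph N" using idx_fix[OF fg, of VA] assms(2) by auto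
  have iB: "idx N r d K VB \<in> alph N" using idx_fix[OF fg, of VB] assms(2) by auto
  have iG: "idx N r d K VG \<in> alph N" using idx_fix[OF fg, of VG] assms(2) by auto
  define g where "g = idx N r d K VG"
  have top: "\<And>j. j \<in> alph N \<Longrightarrow> j \<noteq> g \<Longrightarrow> gmap r d g ` tri \<inter> gmap r d j ` tri = {}"
    using assms(3) unfolding top_isolated_def g_def by auto
  have iso: "uv_isolated N r d K u v g" for u v
  proof -
    have "False" if "(i, g) \<in> Puv N r d K u v" for i
    proof -
      have "i \<in> alph N" "i \<noteq> g" "gmap r d i (omega v) = gmap r d g (omega u)"
        using that unfolding Puv_def delta_Id_to_S_def by auto
      then show False using top[of i] omega_in_tri[of u] omega_in_tri[of v] by blast
    qed
    moreover have "False" if "(g, k) \<in> Puv N r d K u v" for k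
    proof -
      have "k \<in> alph N" "k \<noteq> g" "gmap r d g (omega v) = gmap r d k (omega u)"
        using that unfolding Puv_def delta_Id_to_S_def by auto
      then show False using top[of k] omega_in_tri[of u] omega_in_tri[of v] by blast
    qed
    ultimately show ?thesis unfolding uv_isolated_def by blast
  qed
  define h where "h i = Im (gmap r d i 0)" for i
  define R where "R = Puv N r d K VA VG \<union> Puv N r d K VB VG"
  have Rh: "h a < h b" if "(a, b) \<in> R" for a b
  proof -
    have a: "a \<in> alph N" and
      e: "gmap r d a (omega VG) = gmap r d b (omega VA) \<or> gmap r d a (omega VG) = gmap r d b (omega VB)"
      using that unfolding R_def Puv_def delta_Id_to_S_def by auto
    have "r a > 0" using rr a by simp
    then have "h a < Im (gmap r d a (omega VG))"
      unfolding h_def by (simp add: gmap_def algebra_simps)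
    also have "\<dots> = h b"
    proof -
      from e have "Im (gmap r d a (omega VG)) = Im (gmap r d b (omega VA)) \<or>
          Im (gmap r d a (omega VG)) = Im (gmap r d b (omega VB))" by auto
      then show ?thesis unfolding h_def by (auto simp: gmap_def)
    qed
    finally show ?thesis .
  qed
  have "h a < h b" if "(a, b) \<in> R\<^sup>+" for a b
    using that by (induct rule: trancl_induct) (auto dest: Rh)
  then have acy: "acyclic R" unfolding acyclic_def by blast
  show ?thesis unfolding gamma_isolated_def using iA iB iG iso acy
    unfolding R_def g_def by blast
qed

end
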